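(* Let $\phi\colon F\to G$ of type $|\alpha|\xrightarrow{\sigma}n\xleftarrow{\tau}|\beta|$ and $\psi\colon G\to H$ of type $|\beta|\xrightarrow{\eta}m\xleftarrow{\theta}|\gamma|$ be transformations, with $F\colon\mathbb B^\alpha\to\mathbb C$, $G\colon\mathbb B^\beta\to\mathbb C$, $H\colon\mathbb B^\gamma\to\mathbb C$, and let $\zeta\colon n\to l$, $\xi\colon m\to l$ be the pushout of $\tau$ and $\eta$ in finite sets, so that $\psi\circ\phi$ has type $|\alpha|\xrightarrow{\zeta\sigma}l\xleftarrow{\xi\theta}|\gamma|$. Let $i\in l$. If $\phi$ is dinatural in its $x$-th variable for every $x\in\zeta^{-1}\{i\}$, $\psi$ is dinatural in its $y$-th variable for every $y\in\xi^{-1}\{i\}$, and the $i$-th connected component of $\Gamma(\psi)\circ\Gamma(\phi)$ is acyclic, then $\psi\circ\phi$ is dinatural in its $i$-th variable.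
   Context: Notation: for $k\in\mathbb N$, $k$ also denotes $\{1,\dots,k\}$. For $\alpha\in\{+,-\}^*$, $\mathbb B^\alpha=\mathbb B^{\alpha_1}\times\cdots\times\mathbb B^{\alpha_{|\alpha|}}$ with $\mathbb B^+=\mathbb B$, $\mathbb B^-=\mathbb B^{op}$. For $\mathbf A=(A_1,\dots,A_n)$ and $\sigma\colon k\to n$, $\mathbf A\sigma=(A_{\sigma1},\dots,A_{\sigma k})$. A morphism $f\colon A\to B$ placed in a contravariant argument is regarded as a morphism $B\to A$ of $\mathbb B^{op}$. A transformation $\phi\colon F\to G$ of type $|\alpha|\xrightarrow{\sigma}n\xleftarrow{\tau}|\beta|$ ($\sigma,\tau$ arbitrary functions) is a family $\phi_{\mathbf A}\colon F(\mathbf A\sigma)\to G(\mathbf A\tau)$, $\mathbf A\in\mathrm{Ob}(\mathbb B)^n$; $A_i$ is its $i$-th variable. $\mathbf A[X,Y/i]\sigma$ is the tuple whose $j$-th entry is $X$ if $\sigma j=i,\alpha_j=-$, $Y$ if $\sigma j=i,\alpha_j=+$, and $A_{\sigma j}$ (or $1_{A_{\sigma j}}$ when $X,Y$ are morphisms) otherwise; $\mathbf A[X/i]=\mathbf A[X,X/i]$. $\phi$ is dinatural in its $i$-th variable if for all objects $A_j$ ($j\neq i$) and all $f\colon A\to B$: $G(\mathbf A[A,f/i]\tau)\circ\phi_{\mathbf A[A/i]}\circ F(\mathbf A[f,A/i]\sigma)=G(\mathbf A[f,B/i]\tau)\circ\phi_{\mathbf A[B/i]}\circ F(\mathbf A[B,f/i]\sigma)$.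 Vertical composite: $(\psi\circ\phi)_{\mathbf A}=\psi_{\mathbf A\xi}\circ\phi_{\mathbf A\zeta}$ for $\mathbf A\in\mathrm{Ob}(\mathbb B)^l$. Composite graph $\Gamma(\psi)\circ\Gamma(\phi)$: directed bipartite graph with places the disjoint union of $|\alpha|,|\beta|,|\gamma|$ and transitions $n\sqcup m$. For $t\in n$: arc from place $j$ of the $\alpha$-block to $t$ iff $\sigma j=t,\alpha_j=+$; from $t$ to it iff $\sigma j=t,\alpha_j=-$; arc from place $j$ of the $\beta$-block to $t$ iff $\tau j=t,\beta_j=-$; from $t$ to it iff $\tau j=t,\beta_j=+$. For $t\in m$: arc from place $j$ of the $\beta$-block to $t$ iff $\eta j=t,\beta_j=+$; from $t$ to it iff $\eta j=t,\beta_j=-$; arc from place $j$ of the $\gamma$-block to $t$ iff $\theta j=t,\gamma_j=-$; from $t$ to it iff $\theta j=t,\gamma_j=+$. Its connected components correspond bijectively to $l$: the $i$-th component is the one containing the transitions $t\in n$ with $\zeta t=i$ and $t\in m$ with $\xi t=i$. Acyclic means without directed cycles. *)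

theory Defs
  imports Main
begin

record ('o, 'm) cat =
  Obj :: "'o set"
  Arr :: "'o \<Rightarrow> 'o \<Rightarrow> 'm set"
  cmp :: "'m \<Rightarrow> 'm \<Rightarrow> 'm"   (* cmp g f = g \<circ> f *)
  idm :: "'o \<Rightarrow> 'm"

definition is_category :: "('o, 'm, 'z) cat_scheme \<Rightarrow> bool" where
  "is_category C \<longleftrightarrow>
     (\<forall>A B f. f \<in> Arr C A B \<longrightarrow> A \<in> Obj C \<and> B \<in> Obj C) \<and>
     (\<forall>A \<in> Obj C. idm C A \<in> Arr C A A) \<and>
     (\<forall>A B D f g. f \<in> Arr C A B \<longrightarrow> g \<in> Arr C B D \<longrightarrow> cmp C g f \<in> Arr C A D) \<and>
     (\<forall>A B D E f g h. f \<in> Arr C A B \<longrightarrow> g \<in> Arr C B D \<longrightarrow> h \<in> Arr C D E \<longrightarrow>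
         cmp C h (cmp C g f) = cmp C (cmp C h g) f) \<and>
     (\<forall>A B f. f \<in> Arr C A B \<longrightarrow> cmp C f (idm C A) = f \<and> cmp C (idm C B) f = f)"

text \<open>The product category B^alpha; a sign list alpha uses True for + and False for -.
  Objects are lists of objects of length |alpha|; a morphism component at a
  contravariant position j goes in the opposite direction in B.\<close>

definition power_cat :: "('o, 'm, 'z) cat_scheme \<Rightarrow> bool list \<Rightarrow> ('o list, 'm list) cat" where
  "power_cat B \<alpha> =
     \<lparr> Obj = {As. length As = length \<alpha> \<and> set As \<subseteq> Obj B},
       Arr = (\<lambda>As Bs. {fs. length As = length \<alpha> \<and> set As \<subseteq> Obj B \<and>
                           length Bs = length \<alpha> \<and> set Bs \<subseteq> Obj B \<and>
                           length fs = length \<alpha> \<and>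
                           (\<forall>j < length \<alpha>. fs ! j \<in>
                              (if \<alpha> ! j then Arr B (As ! j) (Bs ! j) else Arr B (Bs ! j) (As ! j)))}),
       cmp = (\<lambda>gs fs. map (\<lambda>j. if \<alpha> ! j then cmp B (gs ! j) (fs ! j) else cmp B (fs ! j) (gs ! j))
                          [0..<length \<alpha>]),
       idm = (\<lambda>As. map (idm B) As) \<rparr>"

definition is_functor ::
  "('o, 'm, 'z) cat_scheme \<Rightarrow> ('p, 'q, 'w) cat_scheme \<Rightarrow> ('o \<Rightarrow> 'p) \<Rightarrow> ('m \<Rightarrow> 'q) \<Rightarrow> bool" where
  "is_functor D C Fo Fm \<longleftrightarrow>
     (\<forall>A \<in> Obj D. Fo A \<in> Obj C) \<and>
     (\<forall>A B f. f \<in> Arr D A B \<longrightarrow> Fm f \<in> Arr C (Fo A) (Fo B)) \<and>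
     (\<forall>A \<in> Obj D. Fm (idm D A) = idm C (Fo A)) \<and>
     (\<forall>A B E f g. f \<in> Arr D A B \<longrightarrow> g \<in> Arr D B E \<longrightarrow> Fm (cmp D g f) = cmp C (Fm g) (Fm f))"

section \<open>Tuples, reindexing and substitution (indices are 0-based: k = {0..<k})\<close>

definition reidx :: "'a list \<Rightarrow> (nat \<Rightarrow> nat) \<Rightarrow> nat \<Rightarrow> 'a list" where
  "reidx As \<sigma> k = map (\<lambda>j. As ! (\<sigma> j)) [0..<k]"

definition subst_obj :: "'o list \<Rightarrow> 'o \<Rightarrow> 'o \<Rightarrow> nat \<Rightarrow> (nat \<Rightarrow> nat) \<Rightarrow> bool list \<Rightarrow> 'o list" where
  "subst_obj As X Y i \<sigma> \<alpha> =
     map (\<lambda>j. if \<sigma> j = i then (if \<alpha> ! j then Y else X) else As ! (\<sigma> j)) [0..<length \<alpha>]"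

text \<open>Morphisms: A[f,g/i]sigma, identities elsewhere (an object X in a morphism
  substitution stands for its identity).\<close>
definition subst_mor ::
  "('o, 'm, 'z) cat_scheme \<Rightarrow> 'o list \<Rightarrow> 'm \<Rightarrow> 'm \<Rightarrow> nat \<Rightarrow> (nat \<Rightarrow> nat) \<Rightarrow> bool list \<Rightarrow> 'm list" where
  "subst_mor B As f g i \<sigma> \<alpha> =
     map (\<lambda>j. if \<sigma> j = i then (if \<alpha> ! j then g else f) else idm B (As ! (\<sigma> j))) [0..<length \<alpha>]"

definition maps_into :: "(nat \<Rightarrow> nat) \<Rightarrow> nat \<Rightarrow> nat \<Rightarrow> bool" where
  "maps_into f a b \<longleftrightarrow> (\<forall>x < a. f x < b)"

definition is_transformation ::
  "('o, 'm, 'z) cat_scheme \<Rightarrow> ('p, 'q, 'w) cat_scheme \<Rightarrow> bool list \<Rightarrow> bool list \<Rightarrow> nat \<Rightarrow>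
   (nat \<Rightarrow> nat) \<Rightarrow> (nat \<Rightarrow> nat) \<Rightarrow> ('o list \<Rightarrow> 'p) \<Rightarrow> ('o list \<Rightarrow> 'p) \<Rightarrow> ('o list \<Rightarrow> 'q) \<Rightarrow> bool" where
  "is_transformation B C \<alpha> \<beta> n \<sigma> \<tau> Fo Go \<phi> \<longleftrightarrow>
     maps_into \<sigma> (length \<alpha>) n \<and> maps_into \<tau> (length \<beta>) n \<and>
     (\<forall>As. length As = n \<and> set As \<subseteq> Obj B \<longrightarrow>
        \<phi> As \<in> Arr C (Fo (reidx As \<sigma> (length \<alpha>))) (Go (reidx As \<tau> (length \<beta>))))"

definition dinatural_in ::
  "('o, 'm, 'z) cat_scheme \<Rightarrow> ('p, 'q, 'w) cat_scheme \<Rightarrow> bool list \<Rightarrow> bool list \<Rightarrow> nat \<Rightarrow>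
   (nat \<Rightarrow> nat) \<Rightarrow> (nat \<Rightarrow> nat) \<Rightarrow> ('m list \<Rightarrow> 'q) \<Rightarrow> ('m list \<Rightarrow> 'q) \<Rightarrow> ('o list \<Rightarrow> 'q) \<Rightarrow> nat \<Rightarrow> bool" where
  "dinatural_in B C \<alpha> \<beta> n \<sigma> \<tau> Fm Gm \<phi> i \<longleftrightarrow>
     (\<forall>As A A' f. length As = n \<and> set As \<subseteq> Obj B \<and> f \<in> Arr B A A' \<longrightarrow>
        cmp C (Gm (subst_mor B As (idm B A) f i \<tau> \<beta>))
              (cmp C (\<phi> (As[i := A])) (Fm (subst_mor B As f (idm B A) i \<sigma> \<alpha>)))
      = cmp C (Gm (subst_mor B As f (idm B A') i \<tau> \<beta>))
              (cmp C (\<phi> (As[i := A'])) (Fm (subst_mor B As (idm B A') f i \<sigma> \<alpha>))))"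

definition vcomp ::
  "('p, 'q, 'w) cat_scheme \<Rightarrow> nat \<Rightarrow> nat \<Rightarrow> (nat \<Rightarrow> nat) \<Rightarrow> (nat \<Rightarrow> nat) \<Rightarrow>
   ('o list \<Rightarrow> 'q) \<Rightarrow> ('o list \<Rightarrow> 'q) \<Rightarrow> 'o list \<Rightarrow> 'q" where
  "vcomp C n m \<zeta> \<xi> \<psi> \<phi> As = cmp C (\<psi> (reidx As \<xi> m)) (\<phi> (reidx As \<zeta> n))"

text \<open>zeta : n -> l, xi : m -> l is a pushout of tau : b -> n and eta : b -> m
  in the category of finite sets (every finite set is in bijection with some k).\<close>
definition is_pushout ::
  "nat \<Rightarrow> nat \<Rightarrow> nat \<Rightarrow> (nat \<Rightarrow> nat) \<Rightarrow> (nat \<Rightarrow> nat) \<Rightarrow> nat \<Rightarrow> (nat \<Rightarrow> nat) \<Rightarrow> (nat \<Rightarrow> nat) \<Rightarrow> bool" where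
  "is_pushout b n m \<tau> \<eta> l \<zeta> \<xi> \<longleftrightarrow>
     maps_into \<tau> b n \<and> maps_into \<eta> b m \<and> maps_into \<zeta> n l \<and> maps_into \<xi> m l \<and>
     (\<forall>j < b. \<zeta> (\<tau> j) = \<xi> (\<eta> j)) \<and>
     (\<forall>k a c. maps_into a n k \<and> maps_into c m k \<and> (\<forall>j < b. a (\<tau> j) = c (\<eta> j)) \<longrightarrow>
        (\<exists>u. maps_into u l k \<and> (\<forall>x < n. u (\<zeta> x) = a x) \<and> (\<forall>y < m. u (\<xi> y) = c y)) \<and>
        (\<forall>u u'. maps_into u l k \<and> (\<forall>x < n. u (\<zeta> x) = a x) \<and> (\<forall>y < m. u (\<xi> y) = c y) \<and>
                maps_into u' l k \<and> (\<forall>x < n. u' (\<zeta> x) = a x) \<and> (\<forall>y < m. u' (\<xi> y) = c y)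
                \<longrightarrow> (\<forall>z < l. u z = u' z)))"

datatype node = PA nat | PB nat | PC nat | TN nat | TM nat

definition comp_graph ::
  "bool list \<Rightarrow> bool list \<Rightarrow> bool list \<Rightarrow> (nat \<Rightarrow> nat) \<Rightarrow> (nat \<Rightarrow> nat) \<Rightarrow> (nat \<Rightarrow> nat) \<Rightarrow> (nat \<Rightarrow> nat)
   \<Rightarrow> (node \<times> node) set" where
  "comp_graph \<alpha> \<beta> \<gamma> \<sigma> \<tau> \<eta> \<theta> =
      {(PA j, TN (\<sigma> j)) | j. j < length \<alpha> \<and> \<alpha> ! j}
    \<union> {(TN (\<sigma> j), PA j) | j. j < length \<alpha> \<and> \<not> \<alpha> ! j}
    \<union> {(PB j, TN (\<tau> j)) | j. j < length \<beta> \<and> \<not> \<beta> ! j}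
    \<union> {(TN (\<tau> j), PB j) | j. j < length \<beta> \<and> \<beta> ! j}
    \<union> {(PB j, TM (\<eta> j)) | j. j < length \<beta> \<and> \<beta> ! j}
    \<union> {(TM (\<eta> j), PB j) | j. j < length \<beta> \<and> \<not> \<beta> ! j}
    \<union> {(PC j, TM (\<theta> j)) | j. j < length \<gamma> \<and> \<not> \<gamma> ! j}
    \<union> {(TM (\<theta> j), PC j) | j. j < length \<gamma> \<and> \<gamma> ! j}"

definition component :: "(node \<times> node) set \<Rightarrow> nat \<Rightarrow> nat \<Rightarrow> (nat \<Rightarrow> nat) \<Rightarrow> (nat \<Rightarrow> nat) \<Rightarrow> nat \<Rightarrow> node set" where
  "component E n m \<zeta> \<xi> i =
     {v. \<exists>t. ((t \<in> TN ` {x. x < n \<and> \<zeta> x = i}) \<or> (t \<in> TM ` {y. y < m \<and> \<xi> y = i})) \<and>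
            (t, v) \<in> (E \<union> E\<inverse>)\<^sup>*}"

end

theory Submission
  imports Defs
begin

lemma pc_arr_map:
  assumes "k = length \<alpha>" "\<forall>j<k. a j \<in> Obj B" "\<forall>j<k. b j \<in> Obj B"
    "\<forall>j<k. g j \<in> (if \<alpha>!j then Arr B (a j) (b j) else Arr B (b j) (a j))"
  shows "map g [0..<k] \<in> Arr (power_cat B \<alpha>) (map a [0..<k]) (map b [0..<k])"
  using assms by (auto simp: power_cat_def)

lemma pc_cmp_map:
  assumes "k = length \<alpha>"
  shows "cmp (power_cat B \<alpha>) (map g [0..<k]) (map h [0..<k])
       = map (\<lambda>j. if \<alpha>!j then cmp B (g j) (h j) else cmp B (h j) (g j)) [0..<k]"
  using assms by (auto simp: power_cat_def)

lemma pc_idm: "idm (power_cat B \<alpha>) Xs = map (idm B) Xs"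
  by (simp add: power_cat_def)

lemma fun_arr: "is_functor D C Fo Fm \<Longrightarrow> f \<in> Arr D X Y \<Longrightarrow> Fm f \<in> Arr C (Fo X) (Fo Y)"
  unfolding is_functor_def by blast
lemma fun_cmp: "is_functor D C Fo Fm \<Longrightarrow> f \<in> Arr D X Y \<Longrightarrow> g \<in> Arr D Y Z \<Longrightarrow> Fm (cmp D g f) = cmp C (Fm g) (Fm f)"
  unfolding is_functor_def by blast
lemma fun_id: "is_functor D C Fo Fm \<Longrightarrow> X \<in> Obj D \<Longrightarrow> Fm (idm D X) = idm C (Fo X)"
  unfolding is_functor_def by blast

lemma cat_dom: "is_category C \<Longrightarrow> f \<in> Arr C X Y \<Longrightarrow> X \<in> Obj C \<and> Y \<in> Obj C"
  unfolding is_category_def by blast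
lemma cat_id: "is_category C \<Longrightarrow> X \<in> Obj C \<Longrightarrow> idm C X \<in> Arr C X X"
  unfolding is_category_def by blast
lemma cat_cmp: "is_category C \<Longrightarrow> f \<in> Arr C X Y \<Longrightarrow> g \<in> Arr C Y Z \<Longrightarrow> cmp C g f \<in> Arr C X Z"
  unfolding is_category_def by blast
lemma cat_assoc: "is_category C \<Longrightarrow> f \<in> Arr C X Y \<Longrightarrow> g \<in> Arr C Y Z \<Longrightarrow> h \<in> Arr C Z W \<Longrightarrow>
   cmp C h (cmp C g f) = cmp C (cmp C h g) f"
  unfolding is_category_def by blast
lemma cat_idl: "is_category C \<Longrightarrow> f \<in> Arr C X Y \<Longrightarrow> cmp C (idm C Y) f = f"
  unfolding is_category_def by blast
lemma cat_idr: "is_category C \<Longrightarrow> f \<in> Arr C X Y \<Longrightarrow> cmp C f (idm C X) = f"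
  unfolding is_category_def by blast


lemma assoc5a:
  assumes C: "is_category C" and a: "g0 \<in> Arr C X0 X1" "g1 \<in> Arr C X1 X2" "g2 \<in> Arr C X2 X3"
    "g3 \<in> Arr C X3 X4" "g4 \<in> Arr C X4 X5"
  shows "cmp C (cmp C g4 g3) (cmp C g2 (cmp C g1 g0)) = cmp C g4 (cmp C (cmp C g3 (cmp C g2 g1)) g0)"
proof -
  have c10: "cmp C g1 g0 \<in> Arr C X0 X2" using cat_cmp[OF C a(1,2)] .
  have c210: "cmp C g2 (cmp C g1 g0) \<in> Arr C X0 X3" using cat_cmp[OF C c10 a(3)] .
  have c21: "cmp C g2 g1 \<in> Arr C X1 X3" using cat_cmp[OF C a(2,3)] .
  have e1: "cmp C (cmp C g4 g3) (cmp C g2 (cmp C g1 g0)) = cmp C g4 (cmp C g3 (cmp C g2 (cmp C g1 g0)))"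
    using cat_assoc[OF C c210 a(4) a(5)] by simp
  have e2: "cmp C g2 (cmp C g1 g0) = cmp C (cmp C g2 g1) g0" using cat_assoc[OF C a(1,2,3)] .
  have e3: "cmp C g3 (cmp C (cmp C g2 g1) g0) = cmp C (cmp C g3 (cmp C g2 g1)) g0"
    using cat_assoc[OF C a(1) c21 a(4)] .
  have "cmp C (cmp C g4 g3) (cmp C g2 (cmp C g1 g0)) = cmp C g4 (cmp C g3 (cmp C g2 (cmp C g1 g0)))" by (rule e1)
  also have "\<dots> = cmp C g4 (cmp C g3 (cmp C (cmp C g2 g1) g0))" by (simp only: e2)
  also have "\<dots> = cmp C g4 (cmp C (cmp C g3 (cmp C g2 g1)) g0)" by (simp only: e3)
  finally show ?thesis .
qed

lemma assoc6:
  assumes C: "is_category C" and a: "g0 \<in> Arr C X0 X1" "g1 \<in> Arr C X1 X2" "g2 \<in> Arr C X2 X3"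
    "g3 \<in> Arr C X3 X4" "g4 \<in> Arr C X4 X5" "g5 \<in> Arr C X5 X6"
  shows "cmp C (cmp C g5 g4) (cmp C g3 (cmp C (cmp C g2 g1) g0))
       = cmp C g5 (cmp C (cmp C g4 (cmp C g3 g2)) (cmp C g1 g0))"
proof -
  have c10: "cmp C g1 g0 \<in> Arr C X0 X2" using cat_cmp[OF C a(1,2)] .
  have c21: "cmp C g2 g1 \<in> Arr C X1 X3" using cat_cmp[OF C a(2,3)] .
  have c210: "cmp C (cmp C g2 g1) g0 \<in> Arr C X0 X3" using cat_cmp[OF C a(1) c21] .
  have c3210: "cmp C g3 (cmp C (cmp C g2 g1) g0) \<in> Arr C X0 X4" using cat_cmp[OF C c210 a(4)] .
  have c32: "cmp C g3 g2 \<in> Arr C X2 X4" using cat_cmp[OF C a(3,4)] .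
  have e1: "cmp C (cmp C g5 g4) (cmp C g3 (cmp C (cmp C g2 g1) g0))
      = cmp C g5 (cmp C g4 (cmp C g3 (cmp C (cmp C g2 g1) g0)))"
    using cat_assoc[OF C c3210 a(5) a(6)] by simp
  have e2: "cmp C (cmp C g2 g1) g0 = cmp C g2 (cmp C g1 g0)" using cat_assoc[OF C a(1,2,3)] by simp
  have e3: "cmp C g3 (cmp C g2 (cmp C g1 g0)) = cmp C (cmp C g3 g2) (cmp C g1 g0)"
    using cat_assoc[OF C c10 a(3,4)] .
  have e4: "cmp C g4 (cmp C (cmp C g3 g2) (cmp C g1 g0)) = cmp C (cmp C g4 (cmp C g3 g2)) (cmp C g1 g0)"
    using cat_assoc[OF C c10 c32 a(5)] .
  have "cmp C (cmp C g5 g4) (cmp C g3 (cmp C (cmp C g2 g1) g0))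
      = cmp C g5 (cmp C g4 (cmp C g3 (cmp C (cmp C g2 g1) g0)))" by (rule e1)
  also have "\<dots> = cmp C g5 (cmp C g4 (cmp C g3 (cmp C g2 (cmp C g1 g0))))" by (simp only: e2)
  also have "\<dots> = cmp C g5 (cmp C g4 (cmp C (cmp C g3 g2) (cmp C g1 g0)))" by (simp only: e3)
  also have "\<dots> = cmp C g5 (cmp C (cmp C g4 (cmp C g3 g2)) (cmp C g1 g0))" by (simp only: e4)
  finally show ?thesis .
qed

lemma reidx_map: "maps_into \<sigma> k n \<Longrightarrow> reidx (map g [0..<n]) \<sigma> k = map (\<lambda>j. g (\<sigma> j)) [0..<k]"
  by (auto simp: reidx_def maps_into_def)

locale DS =
  fixes B :: "('o,'m) cat" and C :: "('p,'q) cat"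
    and \<alpha> \<beta> \<gamma> :: "bool list" and n m l i :: nat
    and \<sigma> \<tau> \<eta> \<theta> \<zeta> \<xi> :: "nat \<Rightarrow> nat"
    and Fo Go Ho :: "'o list \<Rightarrow> 'p" and Fm Gm Hm :: "'m list \<Rightarrow> 'q"
    and \<phi> \<psi> :: "'o list \<Rightarrow> 'q" and As :: "'o list" and A A' :: 'o and f :: 'm
  assumes catB: "is_category B" and catC: "is_category C"
    and funF: "is_functor (power_cat B \<alpha>) C Fo Fm"
    and funG: "is_functor (power_cat B \<beta>) C Go Gm"
    and funH: "is_functor (power_cat B \<gamma>) C Ho Hm"
    and trphi: "is_transformation B C \<alpha> \<beta> n \<sigma> \<tau> Fo Go \<phi>"
    and trpsi: "is_transformation B C \<beta> \<gamma> m \<eta> \<theta> Go Ho \<psi>"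
    and po: "is_pushout (length \<beta>) n m \<tau> \<eta> l \<zeta> \<xi>"
    and il: "i < l"
    and Asl: "length As = l" and AsO: "set As \<subseteq> Obj B"
    and fA: "f \<in> Arr B A A'"
    and dinN: "\<forall>x < n. \<zeta> x = i \<longrightarrow> dinatural_in B C \<alpha> \<beta> n \<sigma> \<tau> Fm Gm \<phi> x"
    and dinM: "\<forall>y < m. \<xi> y = i \<longrightarrow> dinatural_in B C \<beta> \<gamma> m \<eta> \<theta> Gm Hm \<psi> y"
begin

lemma sig: "j < length \<alpha> \<Longrightarrow> \<sigma> j < n" using trphi by (auto simp: is_transformation_def maps_into_def)
lemma tau: "j < length \<beta> \<Longrightarrow> \<tau> j < n" using trphi by (auto simp: is_transformation_def maps_into_def)
lemma eta: "j < length \<beta> \<Longrightarrow> \<eta> j < m" using trpsi by (auto simp: is_transformation_def maps_into_def)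
lemma the: "j < length \<gamma> \<Longrightarrow> \<theta> j < m" using trpsi by (auto simp: is_transformation_def maps_into_def)
lemma zet: "x < n \<Longrightarrow> \<zeta> x < l" using po by (auto simp: is_pushout_def maps_into_def)
lemma xi: "y < m \<Longrightarrow> \<xi> y < l" using po by (auto simp: is_pushout_def maps_into_def)
lemma comm: "j < length \<beta> \<Longrightarrow> \<zeta> (\<tau> j) = \<xi> (\<eta> j)" using po by (auto simp: is_pushout_def)
lemma AO: "A \<in> Obj B" "A' \<in> Obj B" using cat_dom[OF catB fA] by auto
lemma AsOb: "k < l \<Longrightarrow> As ! k \<in> Obj B" using AsO Asl by auto

definition obj :: "bool \<Rightarrow> 'o" where "obj b = (if b then A' else A)"
definition mf :: "bool \<Rightarrow> bool \<Rightarrow> 'm" where "mf b1 b2 = (if b1 = b2 then idm B (obj b1) else f)"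

lemma objO[simp]: "obj b \<in> Obj B" using AO by (simp add: obj_def)
lemma obj_simps[simp]: "obj True = A'" "obj False = A" by (simp_all add: obj_def)
lemma mf_arr: "\<not> (b1 \<and> \<not> b2) \<Longrightarrow> mf b1 b2 \<in> Arr B (obj b1) (obj b2)"
  using fA cat_id[OF catB] AO by (auto simp: mf_def obj_def)
lemma mf_arr1: "mf False b \<in> Arr B A (obj b)" using mf_arr[of False b] by simp
lemma mf_arr2: "mf b True \<in> Arr B (obj b) A'" using mf_arr[of b True] by simp
lemma mf_simps[simp]: "mf b b = idm B (obj b)" "mf False True = f" by (simp_all add: mf_def)

definition vN :: "node set \<Rightarrow> nat \<Rightarrow> 'o" where
  "vN S x = (if \<zeta> x = i then obj (TN x \<in> S) else As ! (\<zeta> x))"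
definition vM :: "node set \<Rightarrow> nat \<Rightarrow> 'o" where
  "vM S y = (if \<xi> y = i then obj (TM y \<in> S) else As ! (\<xi> y))"
lemma vNO: "x < n \<Longrightarrow> vN S x \<in> Obj B" using AsOb zet by (simp add: vN_def)
lemma vMO: "y < m \<Longrightarrow> vM S y \<in> Obj B" using AsOb xi by (simp add: vM_def)

definition hA :: "node set \<Rightarrow> nat \<Rightarrow> 'm" where
  "hA S j = (if \<zeta> (\<sigma> j) = i then (if \<alpha>!j then mf False (TN (\<sigma> j) \<in> S) else mf (TN (\<sigma> j) \<in> S) True)
             else idm B (As ! \<zeta> (\<sigma> j)))"
definition Fsrc :: "nat \<Rightarrow> 'o" where
  "Fsrc j = (if \<zeta> (\<sigma> j) = i then obj (\<not> \<alpha>!j) else As ! \<zeta> (\<sigma> j))"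
definition hB :: "node set \<Rightarrow> nat \<Rightarrow> 'm" where
  "hB S j = (if \<zeta> (\<tau> j) = i then (if \<beta>!j then mf (TN (\<tau> j) \<in> S) (TM (\<eta> j) \<in> S)
                                   else mf (TM (\<eta> j) \<in> S) (TN (\<tau> j) \<in> S))
             else idm B (As ! \<zeta> (\<tau> j)))"
definition hC :: "node set \<Rightarrow> nat \<Rightarrow> 'm" where
  "hC S j = (if \<xi> (\<theta> j) = i then (if \<gamma>!j then mf (TM (\<theta> j) \<in> S) True else mf False (TM (\<theta> j) \<in> S))
             else idm B (As ! \<xi> (\<theta> j)))"
definition Hdst :: "nat \<Rightarrow> 'o" where
  "Hdst j = (if \<xi> (\<theta> j) = i then obj (\<gamma>!j) else As ! \<xi> (\<theta> j))"

definition closed :: "node set \<Rightarrow> bool" where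
  "closed S \<longleftrightarrow> (\<forall>j<length \<beta>. \<beta>!j \<longrightarrow> TN (\<tau> j) \<in> S \<longrightarrow> TM (\<eta> j) \<in> S) \<and>
                (\<forall>j<length \<beta>. \<not> \<beta>!j \<longrightarrow> TM (\<eta> j) \<in> S \<longrightarrow> TN (\<tau> j) \<in> S)"

definition "LN S = map (vN S) [0..<n]"
definition "LM S = map (vM S) [0..<m]"
definition "FA S = map (hA S) [0..<length \<alpha>]"
definition "GB S = map (hB S) [0..<length \<beta>]"
definition "HC S = map (hC S) [0..<length \<gamma>]"
definition "Fs = map Fsrc [0..<length \<alpha>]"
definition "Hd = map Hdst [0..<length \<gamma>]"
definition "NA S = map (\<lambda>j. vN S (\<sigma> j)) [0..<length \<alpha>]"
definition "NB S = map (\<lambda>j. vN S (\<tau> j)) [0..<length \<beta>]"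
definition "MB S = map (\<lambda>j. vM S (\<eta> j)) [0..<length \<beta>]"
definition "MC S = map (\<lambda>j. vM S (\<theta> j)) [0..<length \<gamma>]"

definition V :: "node set \<Rightarrow> 'q" where
  "V S = cmp C (Hm (HC S)) (cmp C (\<psi> (LM S)) (cmp C (Gm (GB S)) (cmp C (\<phi> (LN S)) (Fm (FA S)))))"

lemma FA_arr: "FA S \<in> Arr (power_cat B \<alpha>) Fs (NA S)"
  unfolding FA_def Fs_def NA_def
  apply (rule pc_arr_map)
  using sig zet AsOb vNO cat_id[OF catB]
  by (auto simp: Fsrc_def hA_def vN_def intro!: mf_arr1 mf_arr2)


lemma hA_el: "j < length \<alpha> \<Longrightarrow> hA S j \<in> (if \<alpha>!j then Arr B (Fsrc j) (vN S (\<sigma> j)) else Arr B (vN S (\<sigma> j)) (Fsrc j))"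
  using sig zet AsOb cat_id[OF catB]
  by (auto simp: Fsrc_def hA_def vN_def intro!: mf_arr1 mf_arr2)

lemma hB_el: "closed S \<Longrightarrow> j < length \<beta> \<Longrightarrow> hB S j \<in> (if \<beta>!j then Arr B (vN S (\<tau> j)) (vM S (\<eta> j)) else Arr B (vM S (\<eta> j)) (vN S (\<tau> j)))"
  using tau eta zet xi AsOb cat_id[OF catB] comm[of j]
  by (auto simp: closed_def hB_def vN_def vM_def intro!: mf_arr)

lemma hC_el: "j < length \<gamma> \<Longrightarrow> hC S j \<in> (if \<gamma>!j then Arr B (vM S (\<theta> j)) (Hdst j) else Arr B (Hdst j) (vM S (\<theta> j)))"
  using the xi AsOb cat_id[OF catB]
  by (auto simp: Hdst_def hC_def vM_def intro!: mf_arr1 mf_arr2)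

lemma hA_el1: "j < length \<alpha> \<Longrightarrow> \<alpha>!j \<Longrightarrow> hA S j \<in> Arr B (Fsrc j) (vN S (\<sigma> j))"
  using hA_el[of j S] by simp
lemma hA_el2: "j < length \<alpha> \<Longrightarrow> \<not>\<alpha>!j \<Longrightarrow> hA S j \<in> Arr B (vN S (\<sigma> j)) (Fsrc j)"
  using hA_el[of j S] by simp
lemma hB_el1: "closed S \<Longrightarrow> j < length \<beta> \<Longrightarrow> \<beta>!j \<Longrightarrow> hB S j \<in> Arr B (vN S (\<tau> j)) (vM S (\<eta> j))"
  using hB_el[of S j] by simp
lemma hB_el2: "closed S \<Longrightarrow> j < length \<beta> \<Longrightarrow> \<not>\<beta>!j \<Longrightarrow> hB S j \<in> Arr B (vM S (\<eta> j)) (vN S (\<tau> j))"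
  using hB_el[of S j] by simp
lemma hC_el1: "j < length \<gamma> \<Longrightarrow> \<gamma>!j \<Longrightarrow> hC S j \<in> Arr B (vM S (\<theta> j)) (Hdst j)"
  using hC_el[of j S] by simp
lemma hC_el2: "j < length \<gamma> \<Longrightarrow> \<not>\<gamma>!j \<Longrightarrow> hC S j \<in> Arr B (Hdst j) (vM S (\<theta> j))"
  using hC_el[of j S] by simp

lemma GB_arr: "closed S \<Longrightarrow> GB S \<in> Arr (power_cat B \<beta>) (NB S) (MB S)"
  unfolding GB_def NB_def MB_def
  apply (rule pc_arr_map)
  using tau eta vNO vMO hB_el by auto

lemma HC_arr: "HC S \<in> Arr (power_cat B \<gamma>) (MC S) Hd"
  unfolding HC_def Hd_def MC_def
  apply (rule pc_arr_map)
  using the vMO hC_el xi AsOb by (auto simp: Hdst_def)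

lemma LN_O: "length (LN S) = n \<and> set (LN S) \<subseteq> Obj B" using vNO by (auto simp: LN_def)
lemma LM_O: "length (LM S) = m \<and> set (LM S) \<subseteq> Obj B" using vMO by (auto simp: LM_def)

lemma mapsig: "maps_into \<sigma> (length \<alpha>) n" "maps_into \<tau> (length \<beta>) n"
  using trphi by (auto simp: is_transformation_def)
lemma mapseta: "maps_into \<eta> (length \<beta>) m" "maps_into \<theta> (length \<gamma>) m"
  using trpsi by (auto simp: is_transformation_def)

lemma phi_gen: "length Xs = n \<Longrightarrow> set Xs \<subseteq> Obj B \<Longrightarrow>
   \<phi> Xs \<in> Arr C (Fo (reidx Xs \<sigma> (length \<alpha>))) (Go (reidx Xs \<tau> (length \<beta>)))"
  using trphi by (auto simp: is_transformation_def)
lemma psi_gen: "length Xs = m \<Longrightarrow> set Xs \<subseteq> Obj B \<Longrightarrow>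
   \<psi> Xs \<in> Arr C (Go (reidx Xs \<eta> (length \<beta>))) (Ho (reidx Xs \<theta> (length \<gamma>)))"
  using trpsi by (auto simp: is_transformation_def)

lemma phi_arr: "\<phi> (LN S) \<in> Arr C (Fo (NA S)) (Go (NB S))"
  using phi_gen[OF conjunct1[OF LN_O] conjunct2[OF LN_O]]
  by (simp add: LN_def NA_def NB_def reidx_map[OF mapsig(1)] reidx_map[OF mapsig(2)])
lemma psi_arr: "\<psi> (LM S) \<in> Arr C (Go (MB S)) (Ho (MC S))"
  using psi_gen[OF conjunct1[OF LM_O] conjunct2[OF LM_O]]
  by (simp add: LM_def MB_def MC_def reidx_map[OF mapseta(1)] reidx_map[OF mapseta(2)])

lemma F_arr: "Fm (FA S) \<in> Arr C (Fo Fs) (Fo (NA S))" using fun_arr[OF funF FA_arr] .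
lemma G_arr: "closed S \<Longrightarrow> Gm (GB S) \<in> Arr C (Go (NB S)) (Go (MB S))" using fun_arr[OF funG GB_arr] .
lemma H_arr: "Hm (HC S) \<in> Arr C (Ho (MC S)) (Ho Hd)" using fun_arr[OF funH HC_arr] .


definition "RA x S = map (\<lambda>j. if \<sigma> j = x then idm B (obj (\<not> \<alpha>!j)) else hA S j) [0..<length \<alpha>]"
definition "MidA x S = map (\<lambda>j. if \<sigma> j = x then obj (\<not> \<alpha>!j) else vN S (\<sigma> j)) [0..<length \<alpha>]"
definition "subA x S b = subst_mor B (LN S) (if b then idm B A' else f) (if b then f else idm B A) x \<sigma> \<alpha>"
definition "NAx x S b = map (\<lambda>j. if \<sigma> j = x then obj b else vN S (\<sigma> j)) [0..<length \<alpha>]"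
definition "RB x S = map (\<lambda>j. if \<tau> j = x then idm B (obj (\<beta>!j)) else hB S j) [0..<length \<beta>]"
definition "MidB x S = map (\<lambda>j. if \<tau> j = x then obj (\<beta>!j) else vN S (\<tau> j)) [0..<length \<beta>]"
definition "subB x S b = subst_mor B (LN S) (if b then f else idm B A) (if b then idm B A' else f) x \<tau> \<beta>"
definition "NBx x S b = map (\<lambda>j. if \<tau> j = x then obj b else vN S (\<tau> j)) [0..<length \<beta>]"

lemma subst_LN: "subst_mor B (LN S) g h x \<sigma>' \<delta> = map (\<lambda>j. if \<sigma>' j = x then (if \<delta>!j then h else g) else idm B (vN S (\<sigma>' j))) [0..<length \<delta>]"
  if "maps_into \<sigma>' (length \<delta>) n"
  using that by (auto simp: subst_mor_def LN_def maps_into_def)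

lemma reidx_upd: "maps_into \<sigma>' k n \<Longrightarrow> reidx ((LN S)[x := X]) \<sigma>' k = map (\<lambda>j. if \<sigma>' j = x then X else vN S (\<sigma>' j)) [0..<k]"
  by (auto simp: reidx_def LN_def maps_into_def nth_list_update)

lemma fl[simp]: "cmp B (idm B A') f = f" using cat_idl[OF catB fA] .
lemma fr[simp]: "cmp B f (idm B A) = f" using cat_idr[OF catB fA] .
lemma iA[simp]: "cmp B (idm B A) (idm B A) = idm B A" using cat_idl[OF catB cat_id[OF catB AO(1)]] .
lemma iA'[simp]: "cmp B (idm B A') (idm B A') = idm B A'" using cat_idl[OF catB cat_id[OF catB AO(2)]] .

lemma vN_ins: "vN (insert (TN x) S) y = (if y = x \<and> \<zeta> x = i then A' else vN S y)"
  by (cases "y = x") (auto simp: vN_def)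
lemma vM_ins: "vM (insert (TN x) S) y = vM S y" by (simp add: vM_def)
lemma vN_insM: "vN (insert (TM y) S) x = vN S x" by (simp add: vN_def)
lemma vM_insM: "vM (insert (TM y) S) z = (if z = y \<and> \<xi> y = i then A' else vM S z)"
  by (cases "z = y") (auto simp: vM_def)

context
  fixes x S
  assumes xn: "x < n" and xz: "\<zeta> x = i" and xS: "TN x \<notin> S" and cl: "closed S"
    and sc: "\<forall>j<length \<beta>. \<beta>!j \<longrightarrow> \<tau> j = x \<longrightarrow> TM (\<eta> j) \<in> S"
begin

lemma vNx: "vN S x = A" using xz xS by (simp add: vN_def)

lemma LN_updA: "(LN S)[x := A] = LN S"
  using vNx xn by (auto simp: LN_def intro!: nth_equalityI simp: nth_list_update)
lemma LN_updA': "(LN S)[x := A'] = LN (insert (TN x) S)"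
  using xn unfolding LN_def by (intro nth_equalityI) (auto simp: nth_list_update vN_ins xz)

lemma NA_x: "NA S = NAx x S False" "NA (insert (TN x) S) = NAx x S True"
  using vNx xz by (auto simp: NA_def NAx_def vN_ins)
lemma NB_x: "NB S = NBx x S False" "NB (insert (TN x) S) = NBx x S True"
  using vNx xz by (auto simp: NB_def NBx_def vN_ins)

lemma RA_arr: "RA x S \<in> Arr (power_cat B \<alpha>) Fs (MidA x S)"
  unfolding RA_def Fs_def MidA_def
proof (rule pc_arr_map)
  show "\<forall>j<length \<alpha>. (if \<sigma> j = x then idm B (obj (\<not> \<alpha> ! j)) else hA S j)
    \<in> (if \<alpha> ! j then Arr B (Fsrc j) (if \<sigma> j = x then obj (\<not> \<alpha> ! j) else vN S (\<sigma> j))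
        else Arr B (if \<sigma> j = x then obj (\<not> \<alpha> ! j) else vN S (\<sigma> j)) (Fsrc j))"
  proof (intro allI impI)
    fix j assume j: "j < length \<alpha>"
    show "(if \<sigma> j = x then idm B (obj (\<not> \<alpha> ! j)) else hA S j)
    \<in> (if \<alpha> ! j then Arr B (Fsrc j) (if \<sigma> j = x then obj (\<not> \<alpha> ! j) else vN S (\<sigma> j))
        else Arr B (if \<sigma> j = x then obj (\<not> \<alpha> ! j) else vN S (\<sigma> j)) (Fsrc j))"
    proof (cases "\<sigma> j = x")
      case True
      then have "Fsrc j = obj (\<not> \<alpha> ! j)" using xz by (simp add: Fsrc_def)
      then show ?thesis using True cat_id[OF catB] AO by simp
    next
      case False then show ?thesis using hA_el1[of j S] hA_el2[of j S] j by auto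
    qed
  qed
qed (use sig zet AsOb vNO in \<open>auto simp: Fsrc_def\<close>)

lemma subA_arr: "subA x S b \<in> Arr (power_cat B \<alpha>) (MidA x S) (NAx x S b)"
  unfolding subA_def MidA_def NAx_def subst_LN[OF mapsig(1)]
  apply (rule pc_arr_map)
  using sig vNO cat_id[OF catB] fA AO by auto

lemma RB_arr: "RB x S \<in> Arr (power_cat B \<beta>) (MidB x S) (MB S)"
proof -
  have e: "vM S (\<eta> j) = obj (\<beta>!j)" if "j < length \<beta>" "\<tau> j = x" for j
    using that sc cl xS comm[of j] xz unfolding closed_def vM_def by (cases "\<beta>!j") auto
  show ?thesis
  unfolding RB_def MidB_def MB_def
  apply (rule pc_arr_map)
  using tau eta vNO vMO cat_id[OF catB] hB_el1[OF cl] hB_el2[OF cl] e AO by auto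
qed

lemma subB_arr: "subB x S b \<in> Arr (power_cat B \<beta>) (NBx x S b) (MidB x S)"
  unfolding subB_def MidB_def NBx_def subst_LN[OF mapsig(2)]
  apply (rule pc_arr_map)
  using tau vNO cat_id[OF catB] fA AO by auto

lemma FA_fac: "FA S = cmp (power_cat B \<alpha>) (subA x S False) (RA x S)"
     "FA (insert (TN x) S) = cmp (power_cat B \<alpha>) (subA x S True) (RA x S)"
proof -
  have el: "hA S j \<in> (if \<alpha>!j then Arr B (Fsrc j) (vN S (\<sigma> j)) else Arr B (vN S (\<sigma> j)) (Fsrc j))"
    if "j < length \<alpha>" for j using hA_el that .
  have h': "hA (insert (TN x) S) j = (if \<sigma> j = x then (if \<alpha>!j then f else idm B A') else hA S j)" for j
    using xz by (auto simp: hA_def)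
  have h0: "hA S j = (if \<alpha>!j then idm B A else f)" if "\<sigma> j = x" for j
    using xz xS that by (auto simp: hA_def)
  have idl: "cmp B (idm B (vN S (\<sigma> j))) (hA S j) = hA S j" if "j < length \<alpha>" "\<alpha>!j" for j
    using cat_idl[OF catB, of "hA S j" "Fsrc j" "vN S (\<sigma> j)"] el[OF that(1)] that(2) by simp
  have idr: "cmp B (hA S j) (idm B (vN S (\<sigma> j))) = hA S j" if "j < length \<alpha>" "\<not>\<alpha>!j" for j
    using cat_idr[OF catB, of "hA S j" "vN S (\<sigma> j)" "Fsrc j"] el[OF that(1)] that(2) by simp
  show "FA S = cmp (power_cat B \<alpha>) (subA x S False) (RA x S)"
    unfolding FA_def subA_def RA_def subst_LN[OF mapsig(1)] pc_cmp_map[OF refl]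
    apply (rule map_cong[OF refl])
    using el h0 idl idr
    by (auto split: if_splits)
  show "FA (insert (TN x) S) = cmp (power_cat B \<alpha>) (subA x S True) (RA x S)"
    unfolding FA_def subA_def RA_def subst_LN[OF mapsig(1)] pc_cmp_map[OF refl] h'
    apply (rule map_cong[OF refl])
    using el idl idr
    by (auto split: if_splits)
qed


lemma GB_fac: "GB S = cmp (power_cat B \<beta>) (RB x S) (subB x S False)"
     "GB (insert (TN x) S) = cmp (power_cat B \<beta>) (RB x S) (subB x S True)"
proof -
  have h': "hB (insert (TN x) S) j = (if \<tau> j = x then (if \<beta>!j then idm B A' else f) else hB S j)" if j: "j < length \<beta>" for j
  proof -
    have "\<beta>!j \<Longrightarrow> \<tau> j = x \<Longrightarrow> TM (\<eta> j) \<in> S" using sc j by blast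
    moreover have "\<not>\<beta>!j \<Longrightarrow> \<tau> j = x \<Longrightarrow> TM (\<eta> j) \<notin> S" using cl xS j unfolding closed_def by blast
    ultimately show ?thesis using xz by (auto simp: hB_def)
  qed
  have h0: "hB S j = (if \<beta>!j then f else idm B A)" if "j < length \<beta>" "\<tau> j = x" for j
  proof -
    have "\<beta>!j \<Longrightarrow> TM (\<eta> j) \<in> S" using sc that by blast
    moreover have "\<not>\<beta>!j \<Longrightarrow> TM (\<eta> j) \<notin> S" using cl xS that unfolding closed_def by blast
    ultimately show ?thesis using xz xS that by (auto simp: hB_def)
  qed
  have idl: "cmp B (idm B (vN S (\<tau> j))) (hB S j) = hB S j" if "j < length \<beta>" "\<not>\<beta>!j" for j
    using cat_idl[OF catB hB_el2[OF cl that]] .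
  have idr: "cmp B (hB S j) (idm B (vN S (\<tau> j))) = hB S j" if "j < length \<beta>" "\<beta>!j" for j
    using cat_idr[OF catB hB_el1[OF cl that]] .
  show "GB S = cmp (power_cat B \<beta>) (RB x S) (subB x S False)"
    unfolding GB_def subB_def RB_def subst_LN[OF mapsig(2)] pc_cmp_map[OF refl]
    apply (rule map_cong[OF refl])
    using h0 idl idr by (auto split: if_splits)
  show "GB (insert (TN x) S) = cmp (power_cat B \<beta>) (RB x S) (subB x S True)"
    unfolding GB_def subB_def RB_def subst_LN[OF mapsig(2)] pc_cmp_map[OF refl]
    apply (rule map_cong[OF refl])
    using h' idl idr by (auto split: if_splits)
qed

lemma stepN: "V S = V (insert (TN x) S)"
proof -
  let ?S' = "insert (TN x) S"
  have cl': "closed ?S'" using cl sc unfolding closed_def by auto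
  have same: "HC ?S' = HC S" "LM ?S' = LM S" by (simp_all add: HC_def hC_def LM_def vM_ins)
  have GF: "Gm (GB S) = cmp C (Gm (RB x S)) (Gm (subB x S False))"
    "Gm (GB ?S') = cmp C (Gm (RB x S)) (Gm (subB x S True))"
    using fun_cmp[OF funG subB_arr RB_arr] GB_fac by simp_all
  have FF: "Fm (FA S) = cmp C (Fm (subA x S False)) (Fm (RA x S))"
    "Fm (FA ?S') = cmp C (Fm (subA x S True)) (Fm (RA x S))"
    using fun_cmp[OF funF RA_arr subA_arr] FA_fac by simp_all
  have a0: "Fm (RA x S) \<in> Arr C (Fo Fs) (Fo (MidA x S))" using fun_arr[OF funF RA_arr] .
  have a1: "Fm (subA x S b) \<in> Arr C (Fo (MidA x S)) (Fo (NAx x S b))" for b using fun_arr[OF funF subA_arr] .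
  have a3: "Gm (subB x S b) \<in> Arr C (Go (NBx x S b)) (Go (MidB x S))" for b using fun_arr[OF funG subB_arr] .
  have a4: "Gm (RB x S) \<in> Arr C (Go (MidB x S)) (Go (MB S))" using fun_arr[OF funG RB_arr] .
  have a2: "\<phi> (LN S) \<in> Arr C (Fo (NAx x S False)) (Go (NBx x S False))"
    using phi_arr[of S] NA_x NB_x by simp
  have a2': "\<phi> (LN ?S') \<in> Arr C (Fo (NAx x S True)) (Go (NBx x S True))"
    using phi_arr[of ?S'] NA_x NB_x by simp
  have din: "cmp C (Gm (subB x S False)) (cmp C (\<phi> (LN S)) (Fm (subA x S False)))
           = cmp C (Gm (subB x S True)) (cmp C (\<phi> (LN ?S')) (Fm (subA x S True)))"
  proof -
    have d: "dinatural_in B C \<alpha> \<beta> n \<sigma> \<tau> Fm Gm \<phi> x" using dinN xn xz by blast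
    have "length (LN S) = n \<and> set (LN S) \<subseteq> Obj B \<and> f \<in> Arr B A A'" using LN_O fA by blast
    then have "cmp C (Gm (subst_mor B (LN S) (idm B A) f x \<tau> \<beta>))
              (cmp C (\<phi> ((LN S)[x := A])) (Fm (subst_mor B (LN S) f (idm B A) x \<sigma> \<alpha>)))
      = cmp C (Gm (subst_mor B (LN S) f (idm B A') x \<tau> \<beta>))
              (cmp C (\<phi> ((LN S)[x := A'])) (Fm (subst_mor B (LN S) (idm B A') f x \<sigma> \<alpha>)))"
      using d unfolding dinatural_in_def by blast
    then show ?thesis unfolding subA_def subB_def LN_updA LN_updA' by simp
  qed
  have "V S = cmp C (Hm (HC S)) (cmp C (\<psi> (LM S)) (cmp C (Gm (RB x S))
          (cmp C (cmp C (Gm (subB x S False)) (cmp C (\<phi> (LN S)) (Fm (subA x S False)))) (Fm (RA x S)))))"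
    unfolding V_def GF FF using assoc5a[OF catC a0 a1 a2 a3 a4] by simp
  also have "\<dots> = cmp C (Hm (HC S)) (cmp C (\<psi> (LM S)) (cmp C (Gm (RB x S))
          (cmp C (cmp C (Gm (subB x S True)) (cmp C (\<phi> (LN ?S')) (Fm (subA x S True)))) (Fm (RA x S)))))"
    unfolding din ..
  also have "\<dots> = V ?S'"
    unfolding V_def GF FF same using assoc5a[OF catC a0 a1 a2' a3 a4] by simp
  finally show ?thesis .
qed

end


definition "RC y S = map (\<lambda>j. if \<theta> j = y then idm B (obj (\<gamma>!j)) else hC S j) [0..<length \<gamma>]"
definition "MidC y S = map (\<lambda>j. if \<theta> j = y then obj (\<gamma>!j) else vM S (\<theta> j)) [0..<length \<gamma>]"
definition "subC y S b = subst_mor B (LM S) (if b then f else idm B A) (if b then idm B A' else f) y \<theta> \<gamma>"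
definition "MCx y S b = map (\<lambda>j. if \<theta> j = y then obj b else vM S (\<theta> j)) [0..<length \<gamma>]"
definition "RBm y S = map (\<lambda>j. if \<eta> j = y then idm B (obj (\<not>\<beta>!j)) else hB S j) [0..<length \<beta>]"
definition "MidBm y S = map (\<lambda>j. if \<eta> j = y then obj (\<not>\<beta>!j) else vM S (\<eta> j)) [0..<length \<beta>]"
definition "subBm y S b = subst_mor B (LM S) (if b then idm B A' else f) (if b then f else idm B A) y \<eta> \<beta>"
definition "MBx y S b = map (\<lambda>j. if \<eta> j = y then obj b else vM S (\<eta> j)) [0..<length \<beta>]"

lemma subst_LM: "subst_mor B (LM S) g h y \<sigma>' \<delta> = map (\<lambda>j. if \<sigma>' j = y then (if \<delta>!j then h else g) else idm B (vM S (\<sigma>' j))) [0..<length \<delta>]"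
  if "maps_into \<sigma>' (length \<delta>) m"
  using that by (auto simp: subst_mor_def LM_def maps_into_def)

context
  fixes y S
  assumes ym: "y < m" and yx: "\<xi> y = i" and yS: "TM y \<notin> S" and cl: "closed S"
    and sc: "\<forall>j<length \<beta>. \<not>\<beta>!j \<longrightarrow> \<eta> j = y \<longrightarrow> TN (\<tau> j) \<in> S"
begin

lemma vMy: "vM S y = A" using yx yS by (simp add: vM_def)

lemma LM_updA: "(LM S)[y := A] = LM S"
  using vMy ym by (auto simp: LM_def intro!: nth_equalityI simp: nth_list_update)
lemma LM_updA': "(LM S)[y := A'] = LM (insert (TM y) S)"
  using ym unfolding LM_def by (intro nth_equalityI) (auto simp: nth_list_update vM_insM yx)

lemma MB_y: "MB S = MBx y S False" "MB (insert (TM y) S) = MBx y S True"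
  using vMy yx by (auto simp: MB_def MBx_def vM_insM)
lemma MC_y: "MC S = MCx y S False" "MC (insert (TM y) S) = MCx y S True"
  using vMy yx by (auto simp: MC_def MCx_def vM_insM)

lemma RC_arr: "RC y S \<in> Arr (power_cat B \<gamma>) (MidC y S) Hd"
  unfolding RC_def Hd_def MidC_def
proof (rule pc_arr_map)
  show "\<forall>j<length \<gamma>. (if \<theta> j = y then idm B (obj (\<gamma> ! j)) else hC S j)
    \<in> (if \<gamma> ! j then Arr B (if \<theta> j = y then obj (\<gamma> ! j) else vM S (\<theta> j)) (Hdst j)
        else Arr B (Hdst j) (if \<theta> j = y then obj (\<gamma> ! j) else vM S (\<theta> j)))"
  proof (intro allI impI)
    fix j assume j: "j < length \<gamma>"
    show "(if \<theta> j = y then idm B (obj (\<gamma> ! j)) else hC S j)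
    \<in> (if \<gamma> ! j then Arr B (if \<theta> j = y then obj (\<gamma> ! j) else vM S (\<theta> j)) (Hdst j)
        else Arr B (Hdst j) (if \<theta> j = y then obj (\<gamma> ! j) else vM S (\<theta> j)))"
    proof (cases "\<theta> j = y")
      case True
      then have "Hdst j = obj (\<gamma> ! j)" using yx by (simp add: Hdst_def)
      then show ?thesis using True cat_id[OF catB] AO by simp
    next
      case False then show ?thesis using hC_el1[of j S] hC_el2[of j S] j by auto
    qed
  qed
qed (use the xi AsOb vMO in \<open>auto simp: Hdst_def\<close>)

lemma subC_arr: "subC y S b \<in> Arr (power_cat B \<gamma>) (MCx y S b) (MidC y S)"
  unfolding subC_def MidC_def MCx_def subst_LM[OF mapseta(2)]
  apply (rule pc_arr_map)
  using the vMO cat_id[OF catB] fA AO by auto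

lemma RBm_arr: "RBm y S \<in> Arr (power_cat B \<beta>) (NB S) (MidBm y S)"
proof -
  have e: "vN S (\<tau> j) = obj (\<not>\<beta>!j)" if "j < length \<beta>" "\<eta> j = y" for j
    using that sc cl yS comm[of j] yx unfolding closed_def vN_def by (cases "\<beta>!j") auto
  show ?thesis
  unfolding RBm_def MidBm_def NB_def
  apply (rule pc_arr_map)
  using tau eta vNO vMO cat_id[OF catB] hB_el1[OF cl] hB_el2[OF cl] e AO by auto
qed

lemma subBm_arr: "subBm y S b \<in> Arr (power_cat B \<beta>) (MidBm y S) (MBx y S b)"
  unfolding subBm_def MidBm_def MBx_def subst_LM[OF mapseta(1)]
  apply (rule pc_arr_map)
  using eta vMO cat_id[OF catB] fA AO by auto

lemma HC_fac: "HC S = cmp (power_cat B \<gamma>) (RC y S) (subC y S False)"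
     "HC (insert (TM y) S) = cmp (power_cat B \<gamma>) (RC y S) (subC y S True)"
proof -
  have h': "hC (insert (TM y) S) j = (if \<theta> j = y then (if \<gamma>!j then idm B A' else f) else hC S j)" for j
    using yx by (auto simp: hC_def)
  have h0: "hC S j = (if \<gamma>!j then f else idm B A)" if "\<theta> j = y" for j
    using yx yS that by (auto simp: hC_def)
  have idl: "cmp B (idm B (vM S (\<theta> j))) (hC S j) = hC S j" if "j < length \<gamma>" "\<not>\<gamma>!j" for j
    using cat_idl[OF catB hC_el2[OF that]] .
  have idr: "cmp B (hC S j) (idm B (vM S (\<theta> j))) = hC S j" if "j < length \<gamma>" "\<gamma>!j" for j
    using cat_idr[OF catB hC_el1[OF that]] .
  show "HC S = cmp (power_cat B \<gamma>) (RC y S) (subC y S False)"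
    unfolding HC_def subC_def RC_def subst_LM[OF mapseta(2)] pc_cmp_map[OF refl]
    apply (rule map_cong[OF refl])
    using h0 idl idr by (auto split: if_splits)
  show "HC (insert (TM y) S) = cmp (power_cat B \<gamma>) (RC y S) (subC y S True)"
    unfolding HC_def subC_def RC_def subst_LM[OF mapseta(2)] pc_cmp_map[OF refl] h'
    apply (rule map_cong[OF refl])
    using idl idr by (auto split: if_splits)
qed

lemma GBm_fac: "GB S = cmp (power_cat B \<beta>) (subBm y S False) (RBm y S)"
     "GB (insert (TM y) S) = cmp (power_cat B \<beta>) (subBm y S True) (RBm y S)"
proof -
  have t: "\<beta>!j \<Longrightarrow> TN (\<tau> j) \<notin> S" "\<not>\<beta>!j \<Longrightarrow> TN (\<tau> j) \<in> S" if j: "j < length \<beta>" "\<eta> j = y" for j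
    using sc cl yS j unfolding closed_def by blast+
  have h': "hB (insert (TM y) S) j = (if \<eta> j = y then (if \<beta>!j then f else idm B A') else hB S j)" if j: "j < length \<beta>" for j
    using t[OF j] yx comm[OF j] by (auto simp: hB_def)
  have h0: "hB S j = (if \<beta>!j then idm B A else f)" if "j < length \<beta>" "\<eta> j = y" for j
    using t[OF that] yx yS that comm[OF that(1)] by (auto simp: hB_def)
  have idl: "cmp B (idm B (vM S (\<eta> j))) (hB S j) = hB S j" if "j < length \<beta>" "\<beta>!j" for j
    using cat_idl[OF catB hB_el1[OF cl that]] .
  have idr: "cmp B (hB S j) (idm B (vM S (\<eta> j))) = hB S j" if "j < length \<beta>" "\<not>\<beta>!j" for j
    using cat_idr[OF catB hB_el2[OF cl that]] .
  show "GB S = cmp (power_cat B \<beta>) (subBm y S False) (RBm y S)"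
    unfolding GB_def subBm_def RBm_def subst_LM[OF mapseta(1)] pc_cmp_map[OF refl]
    apply (rule map_cong[OF refl])
    using h0 idl idr by (auto split: if_splits)
  show "GB (insert (TM y) S) = cmp (power_cat B \<beta>) (subBm y S True) (RBm y S)"
    unfolding GB_def subBm_def RBm_def subst_LM[OF mapseta(1)] pc_cmp_map[OF refl]
    apply (rule map_cong[OF refl])
    using h' idl idr by (auto split: if_splits)
qed

lemma stepM: "V S = V (insert (TM y) S)"
proof -
  let ?S' = "insert (TM y) S"
  have same: "FA ?S' = FA S" "LN ?S' = LN S" by (simp_all add: FA_def hA_def LN_def vN_insM)
  have HF: "Hm (HC S) = cmp C (Hm (RC y S)) (Hm (subC y S False))"
    "Hm (HC ?S') = cmp C (Hm (RC y S)) (Hm (subC y S True))"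
    using fun_cmp[OF funH subC_arr RC_arr] HC_fac by simp_all
  have GF: "Gm (GB S) = cmp C (Gm (subBm y S False)) (Gm (RBm y S))"
    "Gm (GB ?S') = cmp C (Gm (subBm y S True)) (Gm (RBm y S))"
    using fun_cmp[OF funG RBm_arr subBm_arr] GBm_fac by simp_all
  define Z where "Z = cmp C (\<phi> (LN S)) (Fm (FA S))"
  have a0: "Z \<in> Arr C (Fo Fs) (Go (NB S))" unfolding Z_def using cat_cmp[OF catC F_arr phi_arr] .
  have a1: "Gm (RBm y S) \<in> Arr C (Go (NB S)) (Go (MidBm y S))" using fun_arr[OF funG RBm_arr] .
  have a2: "Gm (subBm y S b) \<in> Arr C (Go (MidBm y S)) (Go (MBx y S b))" for b using fun_arr[OF funG subBm_arr] .
  have a4: "Hm (subC y S b) \<in> Arr C (Ho (MCx y S b)) (Ho (MidC y S))" for b using fun_arr[OF funH subC_arr] .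
  have a5: "Hm (RC y S) \<in> Arr C (Ho (MidC y S)) (Ho Hd)" using fun_arr[OF funH RC_arr] .
  have a3: "\<psi> (LM S) \<in> Arr C (Go (MBx y S False)) (Ho (MCx y S False))"
    using psi_arr[of S] MB_y MC_y by simp
  have a3': "\<psi> (LM ?S') \<in> Arr C (Go (MBx y S True)) (Ho (MCx y S True))"
    using psi_arr[of ?S'] MB_y MC_y by simp
  have din: "cmp C (Hm (subC y S False)) (cmp C (\<psi> (LM S)) (Gm (subBm y S False)))
           = cmp C (Hm (subC y S True)) (cmp C (\<psi> (LM ?S')) (Gm (subBm y S True)))"
  proof -
    have d: "dinatural_in B C \<beta> \<gamma> m \<eta> \<theta> Gm Hm \<psi> y" using dinM ym yx by blast
    have "length (LM S) = m \<and> set (LM S) \<subseteq> Obj B \<and> f \<in> Arr B A A'" using LM_O fA by blast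
    then have "cmp C (Hm (subst_mor B (LM S) (idm B A) f y \<theta> \<gamma>))
              (cmp C (\<psi> ((LM S)[y := A])) (Gm (subst_mor B (LM S) f (idm B A) y \<eta> \<beta>)))
      = cmp C (Hm (subst_mor B (LM S) f (idm B A') y \<theta> \<gamma>))
              (cmp C (\<psi> ((LM S)[y := A'])) (Gm (subst_mor B (LM S) (idm B A') f y \<eta> \<beta>)))"
      using d unfolding dinatural_in_def by blast
    then show ?thesis unfolding subC_def subBm_def LM_updA LM_updA' by simp
  qed
  have "V S = cmp C (Hm (RC y S)) (cmp C (cmp C (Hm (subC y S False)) (cmp C (\<psi> (LM S)) (Gm (subBm y S False))))
                 (cmp C (Gm (RBm y S)) Z))"
    unfolding V_def HF GF Z_def[symmetric] using assoc6[OF catC a0 a1 a2 a3 a4 a5] by simp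
  also have "\<dots> = cmp C (Hm (RC y S)) (cmp C (cmp C (Hm (subC y S True)) (cmp C (\<psi> (LM ?S')) (Gm (subBm y S True))))
                 (cmp C (Gm (RBm y S)) Z))"
    unfolding din ..
  also have "\<dots> = V ?S'"
    unfolding V_def HF GF same Z_def[symmetric] using assoc6[OF catC a0 a1 a2 a3' a4 a5] by simp
  finally show ?thesis .
qed

end


lemma V_uni:
  assumes uN: "\<forall>x<n. \<zeta> x = i \<longrightarrow> (TN x \<in> S \<longleftrightarrow> b)" and uM: "\<forall>y<m. \<xi> y = i \<longrightarrow> (TM y \<in> S \<longleftrightarrow> b)"
  shows "V S = cmp C (Hm (subst_mor B As (if b then f else idm B A) (if b then idm B A' else f) i (\<xi> \<circ> \<theta>) \<gamma>))
     (cmp C (vcomp C n m \<zeta> \<xi> \<psi> \<phi> (As[i := obj b]))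
       (Fm (subst_mor B As (if b then idm B A' else f) (if b then f else idm B A) i (\<zeta> \<circ> \<sigma>) \<alpha>)))"
proof -
  have LN: "LN S = reidx (As[i := obj b]) \<zeta> n"
    using uN zet Asl by (auto simp: LN_def reidx_def vN_def nth_list_update)
  have LM: "LM S = reidx (As[i := obj b]) \<xi> m"
    using uM xi Asl by (auto simp: LM_def reidx_def vM_def nth_list_update)
  have FA: "FA S = subst_mor B As (if b then idm B A' else f) (if b then f else idm B A) i (\<zeta> \<circ> \<sigma>) \<alpha>"
    using uN sig by (auto simp: FA_def hA_def subst_mor_def)
  have HC: "HC S = subst_mor B As (if b then f else idm B A) (if b then idm B A' else f) i (\<xi> \<circ> \<theta>) \<gamma>"
    using uM the by (auto simp: HC_def hC_def subst_mor_def)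
  have NM: "NB S = MB S"
    using uN uM tau eta comm by (auto simp: NB_def MB_def vN_def vM_def)
  have GB: "GB S = idm (power_cat B \<beta>) (NB S)"
    using uN uM tau eta comm by (auto simp: GB_def hB_def NB_def pc_idm vN_def)
  have NBO: "NB S \<in> Obj (power_cat B \<beta>)"
    using vNO tau by (auto simp: NB_def power_cat_def)
  have psiN: "\<psi> (LM S) \<in> Arr C (Go (NB S)) (Ho (MC S))" using psi_arr[of S] NM by simp
  have G: "Gm (GB S) = idm C (Go (NB S))" using fun_id[OF funG NBO] GB by simp
  have pf: "cmp C (\<phi> (LN S)) (Fm (FA S)) \<in> Arr C (Fo Fs) (Go (NB S))" using cat_cmp[OF catC F_arr phi_arr] .
  have "V S = cmp C (Hm (HC S)) (cmp C (\<psi> (LM S)) (cmp C (\<phi> (LN S)) (Fm (FA S))))"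
    unfolding V_def G using cat_idl[OF catC pf] by simp
  also have "\<dots> = cmp C (Hm (HC S)) (cmp C (cmp C (\<psi> (LM S)) (\<phi> (LN S))) (Fm (FA S)))"
    using cat_assoc[OF catC F_arr phi_arr psiN] by simp
  finally show ?thesis unfolding vcomp_def LN LM FA HC .
qed

definition "TT = TN ` {x. x < n \<and> \<zeta> x = i} \<union> TM ` {y. y < m \<and> \<xi> y = i}"
definition "Rel = {(TN (\<tau> j), TM (\<eta> j)) | j. j < length \<beta> \<and> \<beta>!j \<and> \<zeta> (\<tau> j) = i}
   \<union> {(TM (\<eta> j), TN (\<tau> j)) | j. j < length \<beta> \<and> \<not>\<beta>!j \<and> \<xi> (\<eta> j) = i}"

lemma finTT: "finite TT" unfolding TT_def by auto
lemma finRel: "finite Rel"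
proof -
  have "Rel \<subseteq> (\<lambda>j. (TN (\<tau> j), TM (\<eta> j))) ` {..<length \<beta>} \<union> (\<lambda>j. (TM (\<eta> j), TN (\<tau> j))) ` {..<length \<beta>}"
    unfolding Rel_def by auto
  then show ?thesis by (rule finite_subset) auto
qed

lemma Rel_TT: "(u, w) \<in> Rel \<Longrightarrow> u \<in> TT \<and> w \<in> TT"
  unfolding Rel_def TT_def using tau eta comm by force

lemma all_eq:
  assumes acyc: "acyclic Rel"
  shows "closed S \<Longrightarrow> S \<subseteq> TT \<Longrightarrow> V S = V TT"
proof (induction "card (TT - S)" arbitrary: S rule: less_induct)
  case less
  show ?case
  proof (cases "S = TT")
    case True then show ?thesis by simp
  next
    case False
    then obtain u where u: "u \<in> TT - S" using less.prems by blast
    have wf: "wf (Rel\<inverse>)" using finite_acyclic_wf_converse[OF finRel acyc] .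
    then obtain z where z: "z \<in> TT - S" and zmin: "\<forall>w. (w, z) \<in> Rel\<inverse> \<longrightarrow> w \<notin> TT - S"
      using u unfolding wf_eq_minimal by blast
    have succ: "(z, w) \<in> Rel \<Longrightarrow> w \<in> S" for w using zmin Rel_TT by blast
    have lt: "card (TT - insert z S) < card (TT - S)"
      using z finTT by (metis Diff_insert card_Diff1_less finite_Diff)
    have sub: "insert z S \<subseteq> TT" using z less.prems by blast
    show ?thesis
    proof (cases z)
      case (TN x)
      then have x: "x < n" "\<zeta> x = i" "TN x \<notin> S" using z unfolding TT_def by auto
      have sc: "\<forall>j<length \<beta>. \<beta>!j \<longrightarrow> \<tau> j = x \<longrightarrow> TM (\<eta> j) \<in> S"
        using succ x TN unfolding Rel_def by blast
      have cl': "closed (insert z S)" using less.prems sc TN unfolding closed_def by auto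
      have "V S = V (insert z S)" using stepN[OF x less.prems(1) sc] TN by simp
      also have "\<dots> = V TT" using less.hyps[OF lt cl' sub] .
      finally show ?thesis .
    next
      case (TM y)
      then have y: "y < m" "\<xi> y = i" "TM y \<notin> S" using z unfolding TT_def by auto
      have sc: "\<forall>j<length \<beta>. \<not>\<beta>!j \<longrightarrow> \<eta> j = y \<longrightarrow> TN (\<tau> j) \<in> S"
        using succ y TM unfolding Rel_def by blast
      have cl': "closed (insert z S)" using less.prems sc TM unfolding closed_def by auto
      have "V S = V (insert z S)" using stepM[OF y less.prems(1) sc] TM by simp
      also have "\<dots> = V TT" using less.hyps[OF lt cl' sub] .
      finally show ?thesis .
    qed (use z in \<open>auto simp: TT_def\<close>)
  qed
qed

lemma final:
  assumes acyc: "acyclic Rel"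
  shows "cmp C (Hm (subst_mor B As (idm B A) f i (\<xi> \<circ> \<theta>) \<gamma>))
              (cmp C (vcomp C n m \<zeta> \<xi> \<psi> \<phi> (As[i := A])) (Fm (subst_mor B As f (idm B A) i (\<zeta> \<circ> \<sigma>) \<alpha>)))
      = cmp C (Hm (subst_mor B As f (idm B A') i (\<xi> \<circ> \<theta>) \<gamma>))
              (cmp C (vcomp C n m \<zeta> \<xi> \<psi> \<phi> (As[i := A'])) (Fm (subst_mor B As (idm B A') f i (\<zeta> \<circ> \<sigma>) \<alpha>)))"
proof -
  have c0: "closed {}" by (simp add: closed_def)
  have e: "V {} = V TT" using all_eq[OF acyc c0] by simp
  have v0: "V {} = cmp C (Hm (subst_mor B As (idm B A) f i (\<xi> \<circ> \<theta>) \<gamma>))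
              (cmp C (vcomp C n m \<zeta> \<xi> \<psi> \<phi> (As[i := A])) (Fm (subst_mor B As f (idm B A) i (\<zeta> \<circ> \<sigma>) \<alpha>)))"
    using V_uni[of "{}" False] by simp
  have v1: "V TT = cmp C (Hm (subst_mor B As f (idm B A') i (\<xi> \<circ> \<theta>) \<gamma>))
              (cmp C (vcomp C n m \<zeta> \<xi> \<psi> \<phi> (As[i := A'])) (Fm (subst_mor B As (idm B A') f i (\<zeta> \<circ> \<sigma>) \<alpha>)))"
    using V_uni[of TT True] by (simp add: TT_def)
  show ?thesis using e v0 v1 by simp
qed


lemma Rel_acyc:
  assumes "acyclic (comp_graph \<alpha> \<beta> \<gamma> \<sigma> \<tau> \<eta> \<theta> \<inter>
                  (component (comp_graph \<alpha> \<beta> \<gamma> \<sigma> \<tau> \<eta> \<theta>) n m \<zeta> \<xi> i \<times>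
                   component (comp_graph \<alpha> \<beta> \<gamma> \<sigma> \<tau> \<eta> \<theta>) n m \<zeta> \<xi> i))"
  shows "acyclic Rel"
proof -
  define E where "E = comp_graph \<alpha> \<beta> \<gamma> \<sigma> \<tau> \<eta> \<theta>"
  define K where "K = component E n m \<zeta> \<xi> i"
  define Q where "Q = E \<inter> (K \<times> K)"
  have aQ: "acyclic Q" using assms unfolding Q_def K_def E_def .
  have sub: "Rel \<subseteq> Q\<^sup>+"
  proof
    fix p assume "p \<in> Rel"
    then consider (a) j where "p = (TN (\<tau> j), TM (\<eta> j))" "j < length \<beta>" "\<beta>!j" "\<zeta> (\<tau> j) = i"
      | (b) j where "p = (TM (\<eta> j), TN (\<tau> j))" "j < length \<beta>" "\<not>\<beta>!j" "\<xi> (\<eta> j) = i"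
      unfolding Rel_def by blast
    then show "p \<in> Q\<^sup>+"
    proof cases
      case a
      have e1: "(TN (\<tau> j), PB j) \<in> E" "(PB j, TM (\<eta> j)) \<in> E" using a unfolding E_def comp_graph_def by blast+
      have k1: "TN (\<tau> j) \<in> K" using a tau[OF a(2)] unfolding K_def component_def by blast
      have k2: "PB j \<in> K" using a tau[OF a(2)] e1(1) unfolding K_def component_def by blast
      have k3: "TM (\<eta> j) \<in> K" using a eta[OF a(2)] comm[OF a(2)] unfolding K_def component_def by force
      show ?thesis using e1 k1 k2 k3 a(1) unfolding Q_def by (blast intro: trancl_into_trancl r_into_trancl)
    next
      case b
      have e1: "(TM (\<eta> j), PB j) \<in> E" "(PB j, TN (\<tau> j)) \<in> E" using b unfolding E_def comp_graph_def by blast+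
      have k1: "TM (\<eta> j) \<in> K" using b eta[OF b(2)] unfolding K_def component_def by blast
      have k2: "PB j \<in> K" using b eta[OF b(2)] e1(1) unfolding K_def component_def by blast
      have k3: "TN (\<tau> j) \<in> K" using b tau[OF b(2)] comm[OF b(2)] unfolding K_def component_def by force
      show ?thesis using e1 k1 k2 k3 b(1) unfolding Q_def by (blast intro: trancl_into_trancl r_into_trancl)
    qed
  qed
  have "Rel\<^sup>+ \<subseteq> Q\<^sup>+" using trancl_mono_subset[OF sub] by simp
  then show ?thesis using aQ unfolding acyclic_def by blast
qed

end

theorem mainTheorem3:
  fixes B :: "('o, 'm) cat" and C :: "('p, 'q) cat"
    and \<alpha> \<beta> \<gamma> :: "bool list" and n m l i :: nat
    and \<sigma> \<tau> \<eta> \<theta> \<zeta> \<xi> :: "nat \<Rightarrow> nat"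
    and Fo Go Ho :: "'o list \<Rightarrow> 'p" and Fm Gm Hm :: "'m list \<Rightarrow> 'q"
    and \<phi> \<psi> :: "'o list \<Rightarrow> 'q"
  assumes "is_category B" and "is_category C"
    and "is_functor (power_cat B \<alpha>) C Fo Fm"
    and "is_functor (power_cat B \<beta>) C Go Gm"
    and "is_functor (power_cat B \<gamma>) C Ho Hm"
    and "is_transformation B C \<alpha> \<beta> n \<sigma> \<tau> Fo Go \<phi>"
    and "is_transformation B C \<beta> \<gamma> m \<eta> \<theta> Go Ho \<psi>"
    and "is_pushout (length \<beta>) n m \<tau> \<eta> l \<zeta> \<xi>"
    and "i < l"
    and "\<forall>x < n. \<zeta> x = i \<longrightarrow> dinatural_in B C \<alpha> \<beta> n \<sigma> \<tau> Fm Gm \<phi> x"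
    and "\<forall>y < m. \<xi> y = i \<longrightarrow> dinatural_in B C \<beta> \<gamma> m \<eta> \<theta> Gm Hm \<psi> y"
    and "acyclic (comp_graph \<alpha> \<beta> \<gamma> \<sigma> \<tau> \<eta> \<theta> \<inter>
                  (component (comp_graph \<alpha> \<beta> \<gamma> \<sigma> \<tau> \<eta> \<theta>) n m \<zeta> \<xi> i \<times>
                   component (comp_graph \<alpha> \<beta> \<gamma> \<sigma> \<tau> \<eta> \<theta>) n m \<zeta> \<xi> i))"
  shows "dinatural_in B C \<alpha> \<gamma> l (\<zeta> \<circ> \<sigma>) (\<xi> \<circ> \<theta>) Fm Hm (vcomp C n m \<zeta> \<xi> \<psi> \<phi>) i"
  unfolding dinatural_in_def
proof (intro allI impI)
  fix As A A' f
  assume h: "length As = l \<and> set As \<subseteq> Obj B \<and> f \<in> Arr B A A'"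
  interpret DS B C \<alpha> \<beta> \<gamma> n m l i \<sigma> \<tau> \<eta> \<theta> \<zeta> \<xi> Fo Go Ho Fm Gm Hm \<phi> \<psi> As A A' f
    using assms h by unfold_locales auto
  show "cmp C (Hm (subst_mor B As (idm B A) f i (\<xi> \<circ> \<theta>) \<gamma>))
              (cmp C (vcomp C n m \<zeta> \<xi> \<psi> \<phi> (As[i := A])) (Fm (subst_mor B As f (idm B A) i (\<zeta> \<circ> \<sigma>) \<alpha>)))
      = cmp C (Hm (subst_mor B As f (idm B A') i (\<xi> \<circ> \<theta>) \<gamma>))
              (cmp C (vcomp C n m \<zeta> \<xi> \<psi> \<phi> (As[i := A'])) (Fm (subst_mor B As (idm B A') f i (\<zeta> \<circ> \<sigma>) \<alpha>)))"
    using final[OF Rel_acyc[OF assms(12)]] .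
qed

end
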